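(* Let $X\subseteq V_\Delta$ be finite such that $G_X$ is connected and $X$ has no holes. Let $P$ be a portal (for some axis) and let $u,v\in X\setminus P$. A shortest path from $u$ to $v$ in $G_X$ traverses (contains a node of) $P$ if and only if $u$ and $v$ are not in the same connected component of the subgraph of $G_X$ induced by $X\setminus P$.
   Context: $G_\Delta=(V_\Delta,E_\Delta)$ is the infinite regular triangular grid graph; its edges are parallel to one of three axes $x,y,z$. For finite $X\subseteq V_\Delta$, $G_X$ is the subgraph of $G_\Delta$ induced by $X$; $X$ has no holes if the subgraph of $G_\Delta$ induced by $V_\Delta\setminus X$ is connected. For an axis $d$, let $E_d$ be the set of edges of $G_X$ parallel to $d$; the $d$-portals are the vertex sets of the connected components of $(X,E_d)$. A portal is a $d$-portal for some axis $d$. *)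

theory Defs
  imports Main
begin

text \<open>Vertices of the regular triangular grid in axial coordinates:
  each vertex is a pair of integers; the three axes have direction vectors
  (1,0), (0,1) and (1,-1).\<close>

type_synonym tvertex = "int \<times> int"

datatype axis = AxX | AxY | AxZ

fun axis_dir :: "axis \<Rightarrow> int \<times> int" where
  "axis_dir AxX = (1, 0)"
| "axis_dir AxY = (0, 1)"
| "axis_dir AxZ = (1, -1)"

definition adj_axis :: "axis \<Rightarrow> tvertex \<Rightarrow> tvertex \<Rightarrow> bool" where
  "adj_axis d a b \<longleftrightarrow>
     (fst b - fst a, snd b - snd a) = axis_dir d \<or>
     (fst a - fst b, snd a - snd b) = axis_dir d"

definition tadj :: "tvertex \<Rightarrow> tvertex \<Rightarrow> bool" where
  "tadj a b \<longleftrightarrow> (\<exists>d. adj_axis d a b)"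

definition connected_in :: "(tvertex \<Rightarrow> tvertex \<Rightarrow> bool) \<Rightarrow> tvertex set \<Rightarrow> tvertex \<Rightarrow> tvertex \<Rightarrow> bool" where
  "connected_in E S a b \<longleftrightarrow> a \<in> S \<and> b \<in> S \<and> (\<lambda>x y. x \<in> S \<and> y \<in> S \<and> E x y)\<^sup>*\<^sup>* a b"

definition graph_connected :: "tvertex set \<Rightarrow> bool" where
  "graph_connected S \<longleftrightarrow> (\<forall>a\<in>S. \<forall>b\<in>S. connected_in tadj S a b)"

definition no_holes :: "tvertex set \<Rightarrow> bool" where
  "no_holes X \<longleftrightarrow> graph_connected (- X)"

definition is_portal :: "tvertex set \<Rightarrow> tvertex set \<Rightarrow> bool" where
  "is_portal X P \<longleftrightarrow> (\<exists>d. \<exists>a\<in>X. P = {b. connected_in (adj_axis d) X a b})"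

definition is_walk :: "tvertex set \<Rightarrow> tvertex list \<Rightarrow> tvertex \<Rightarrow> tvertex \<Rightarrow> bool" where
  "is_walk S p u v \<longleftrightarrow> p \<noteq> [] \<and> hd p = u \<and> last p = v \<and> set p \<subseteq> S \<and>
     (\<forall>i. Suc i < length p \<longrightarrow> tadj (p ! i) (p ! Suc i))"

definition is_shortest_path :: "tvertex set \<Rightarrow> tvertex list \<Rightarrow> tvertex \<Rightarrow> tvertex \<Rightarrow> bool" where
  "is_shortest_path S p u v \<longleftrightarrow> is_walk S p u v \<and>
     (\<forall>q. is_walk S q u v \<longrightarrow> length p \<le> length q)"

end

theory Submission
  imports Defs
begin


lemma tadj_iff: "tadj a b \<longleftrightarrow> adj_axis AxX a b \<or> adj_axis AxY a b \<or> adj_axis AxZ a b"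
  unfolding tadj_def by (metis axis.exhaust)

lemma tadj_sym: "tadj a b \<Longrightarrow> tadj b a"
  unfolding tadj_iff adj_axis_def by auto

definition frame0 :: "(tvertex \<Rightarrow> int) \<Rightarrow> (tvertex \<Rightarrow> int) \<Rightarrow> (int \<Rightarrow> int \<Rightarrow> tvertex) \<Rightarrow> bool" where
  "frame0 L t pt \<longleftrightarrow> (\<forall>l k. L (pt l k) = l \<and> t (pt l k) = k) \<and> (\<forall>z. pt (L z) (t z) = z) \<and>
     (\<forall>a b. tadj a b \<longleftrightarrow> (L a = L b \<and> \<bar>t a - t b\<bar> = 1) \<or> (L b = L a + 1 \<and> (t b = t a \<or> t b = t a - 1))
        \<or> (L a = L b + 1 \<and> (t a = t b \<or> t a = t b - 1)))"

definition frame :: "axis \<Rightarrow> (tvertex \<Rightarrow> int) \<Rightarrow> (tvertex \<Rightarrow> int) \<Rightarrow> (int \<Rightarrow> int \<Rightarrow> tvertex) \<Rightarrow> bool" where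
  "frame d L t pt \<longleftrightarrow> frame0 L t pt \<and> (\<forall>a b. adj_axis d a b \<longleftrightarrow> L a = L b \<and> \<bar>t a - t b\<bar> = 1)"

lemma frame_X: "frame AxX snd fst (\<lambda>l k. (k, l))"
  unfolding frame_def frame0_def tadj_iff adj_axis_def by auto

lemma frame_Y: "frame AxY fst snd (\<lambda>l k. (l, k))"
  unfolding frame_def frame0_def tadj_iff adj_axis_def by auto

lemma frame_Z: "frame AxZ (\<lambda>z. fst z + snd z) (\<lambda>z. - snd z) (\<lambda>l k. (l + k, - k))"
  unfolding frame_def frame0_def tadj_iff adj_axis_def by auto

lemma frame_ex: "\<exists>L t pt. frame d L t pt"
  by (cases d) (use frame_X frame_Y frame_Z in blast)+

lemma frame_neg: "frame0 L t pt \<Longrightarrow> frame0 (\<lambda>z. - L z) (\<lambda>z. - t z) (\<lambda>l k. pt (- l) (- k))"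
  unfolding frame0_def by auto

lemma frame0_adj: "frame0 L t pt \<Longrightarrow> tadj a b \<longleftrightarrow> (L a = L b \<and> \<bar>t a - t b\<bar> = 1) \<or> (L b = L a + 1 \<and> (t b = t a \<or> t b = t a - 1))
        \<or> (L a = L b + 1 \<and> (t a = t b \<or> t a = t b - 1))"
  unfolding frame0_def by blast

lemma frame0_eq: "frame0 L t pt \<Longrightarrow> a = b \<longleftrightarrow> L a = L b \<and> t a = t b"
  unfolding frame0_def by metis

lemma frame0_pt: "frame0 L t pt \<Longrightarrow> L (pt l k) = l"  "frame0 L t pt \<Longrightarrow> t (pt l k) = k"
  unfolding frame0_def by auto

lemma frame0_pt2: "frame0 L t pt \<Longrightarrow> pt (L z) (t z) = z"
  unfolding frame0_def by (simp only:)



fun ecount :: "('a \<Rightarrow> 'a \<Rightarrow> bool) \<Rightarrow> 'a list \<Rightarrow> nat" where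
  "ecount f [] = 0"
| "ecount f [x] = 0"
| "ecount f (x # y # zs) = (if f x y then 1 else 0) + ecount f (y # zs)"

lemma ec_Cons: "ecount f (x # ys) = (if ys \<noteq> [] \<and> f x (hd ys) then 1 else 0) + ecount f ys"
  by (cases ys) auto

lemma ec_append: "ecount f (xs @ ys) = ecount f xs + ecount f ys + (if xs \<noteq> [] \<and> ys \<noteq> [] \<and> f (last xs) (hd ys) then 1 else 0)"
  by (induction f xs rule: ecount.induct) (auto simp: ec_Cons)

lemma ec_S: fixes S :: "'a \<Rightarrow> bool" shows "xs \<noteq> [] \<Longrightarrow> even (ecount (\<lambda>a b. S a \<noteq> S b) xs) \<longleftrightarrow> (S (hd xs) = S (last xs))"
proof (induction xs)
  case (Cons x ys)
  show ?case
  proof (cases ys)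
    case (Cons y zs)
    have IH: "even (ecount (\<lambda>a b. S a \<noteq> S b) ys) \<longleftrightarrow> (S y = S (last ys))"
      using Cons.IH Cons by simp
    have "ecount (\<lambda>a b. S a \<noteq> S b) (x # ys) = (if S x \<noteq> S y then 1 else 0) + ecount (\<lambda>a b. S a \<noteq> S b) ys"
      using Cons by simp
    then show ?thesis using IH Cons by (cases "S x"; cases "S y"; cases "S (last ys)") auto
  qed simp
qed simp

lemma ec_xor: "successively R xs \<Longrightarrow> (\<forall>a\<in>set xs. \<forall>b\<in>set xs. R a b \<longrightarrow> f a b = (g a b \<noteq> h a b))
  \<Longrightarrow> even (ecount f xs) = even (ecount g xs + ecount h xs)"
proof (induction f xs rule: ecount.induct)
  case (3 f x y zs)
  have IH: "even (ecount f (y # zs)) = even (ecount g (y # zs) + ecount h (y # zs))"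
    using 3 by simp
  have "f x y = (g x y \<noteq> h x y)" using 3(2,3) by simp
  then show ?case using IH by (cases "f x y"; cases "g x y"; cases "h x y") simp_all
qed auto

lemma ec_cong: "successively R xs \<Longrightarrow> (\<forall>a\<in>set xs. \<forall>b\<in>set xs. R a b \<longrightarrow> f a b = g a b)
  \<Longrightarrow> ecount f xs = ecount g xs"
  by (induction f xs rule: ecount.induct) simp_all

lemma ec_zero: "successively R xs \<Longrightarrow> (\<forall>a\<in>set xs. \<forall>b\<in>set xs. R a b \<longrightarrow> \<not> f a b)
  \<Longrightarrow> ecount f xs = 0"
  by (induction f xs rule: ecount.induct) simp_all

definition cross :: "(tvertex \<Rightarrow> int) \<Rightarrow> (tvertex \<Rightarrow> int) \<Rightarrow> tvertex \<Rightarrow> tvertex \<Rightarrow> tvertex \<Rightarrow> bool" where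
  "cross L t w a b \<longleftrightarrow> (L a = L w \<and> L b = L w + 1 \<and> t a > t w) \<or> (L b = L w \<and> L a = L w + 1 \<and> t b > t w)"

lemma E1: assumes F: "frame0 L t pt" and ab: "tadj a b" and "L w' = L w" "t w' = t w + 1" "a \<noteq> w'" "b \<noteq> w'"
  shows "cross L t w a b = cross L t w' a b"
proof -
  have "\<not> (L a = L w' \<and> t a = t w')" "\<not> (L b = L w' \<and> t b = t w')"
    using assms frame0_eq[OF F, of a] frame0_eq[OF F, of b] by blast+
  then show ?thesis using assms frame0_adj[OF F, of a b] unfolding cross_def by smt
qed

lemma E2: assumes F: "frame0 L t pt" and ab: "tadj a b" and "L w = L w0 + 1" "t w = t w0" "a \<noteq> w" "b \<noteq> w"
  shows "((L a = L w \<and> t a \<ge> t w0) \<noteq> (L b = L w \<and> t b \<ge> t w0)) = (cross L t w a b \<noteq> cross L t w0 a b)"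
proof -
  have "\<not> (L a = L w \<and> t a = t w)" "\<not> (L b = L w \<and> t b = t w)"
    using assms frame0_eq[OF F, of a] frame0_eq[OF F, of b] by blast+
  then show ?thesis using assms frame0_adj[OF F, of a b] unfolding cross_def by smt
qed

lemma E3: assumes F: "frame0 L t pt" and ab: "tadj a b" and "L w = L w0 + 1" "t w = t w0 - 1" "a \<noteq> w" "b \<noteq> w"
   "a \<noteq> w0" "b \<noteq> w0"
  shows "((L a = L w \<and> t a \<ge> t w0) \<noteq> (L b = L w \<and> t b \<ge> t w0)) = (cross L t w a b \<noteq> cross L t w0 a b)"
proof -
  have "\<not> (L a = L w \<and> t a = t w)" "\<not> (L b = L w \<and> t b = t w)"
     "\<not> (L a = L w0 \<and> t a = t w0)" "\<not> (L b = L w0 \<and> t b = t w0)"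
    using assms frame0_eq[OF F, of a] frame0_eq[OF F, of b] by blast+
  then show ?thesis using assms frame0_adj[OF F, of a b] unfolding cross_def by smt
qed

definition closed_walk :: "tvertex list \<Rightarrow> bool" where
  "closed_walk g \<longleftrightarrow> g \<noteq> [] \<and> hd g = last g \<and> successively tadj g"

lemma inv_same: assumes F: "frame0 L t pt" and g: "closed_walk g" and "w' \<notin> set g" "L w' = L w" "t w' = t w + 1"
  shows "ecount (cross L t w) g = ecount (cross L t w') g"
  apply (rule ec_cong[where R=tadj])
  using g apply (simp add: closed_walk_def)
  using E1[OF F] assms by metis

lemma inv_up: assumes F: "frame0 L t pt" and g: "closed_walk g" and "w \<notin> set g" "w' \<notin> set g"
   "L w' = L w + 1" "t w' = t w \<or> t w' = t w - 1"
  shows "even (ecount (cross L t w) g) = even (ecount (cross L t w') g)"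
proof -
  define S where "S = (\<lambda>z. L z = L w' \<and> t z \<ge> t w)"
  have "even (ecount (\<lambda>a b. S a \<noteq> S b) g)"
    using ec_S[of g S] g unfolding closed_walk_def by simp
  moreover have "even (ecount (\<lambda>a b. S a \<noteq> S b) g) = even (ecount (cross L t w') g + ecount (cross L t w) g)"
  proof (rule ec_xor[where R=tadj])
    show "successively tadj g" using g by (simp add: closed_walk_def)
    show "\<forall>a\<in>set g. \<forall>b\<in>set g. tadj a b \<longrightarrow> (S a \<noteq> S b) = (cross L t w' a b \<noteq> cross L t w a b)"
    proof (intro ballI impI)
      fix a b assume a: "a \<in> set g" and b: "b \<in> set g" and ab: "tadj a b"
      have ne: "a \<noteq> w" "b \<noteq> w" "a \<noteq> w'" "b \<noteq> w'" using a b assms by auto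
      show "(S a \<noteq> S b) = (cross L t w' a b \<noteq> cross L t w a b)"
        using assms(6)
      proof
        assume "t w' = t w"
        then show ?thesis using E2[OF F ab assms(5)] ne unfolding S_def by simp
      next
        assume "t w' = t w - 1"
        then show ?thesis using E3[OF F ab assms(5)] ne unfolding S_def by simp
      qed
    qed
  qed
  ultimately show ?thesis by auto
qed

lemma inv: assumes F: "frame0 L t pt" and g: "closed_walk g" and "w \<notin> set g" "w' \<notin> set g" "tadj w w'"
  shows "even (ecount (cross L t w) g) = even (ecount (cross L t w') g)"
proof -
  have "(L w = L w' \<and> \<bar>t w - t w'\<bar> = 1) \<or> (L w' = L w + 1 \<and> (t w' = t w \<or> t w' = t w - 1))
        \<or> (L w = L w' + 1 \<and> (t w = t w' \<or> t w = t w' - 1))"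
    using frame0_adj[OF F] assms(5) by blast
  moreover
  { assume "L w = L w'" "t w' = t w + 1"
    then have ?thesis using inv_same[OF F g assms(4)] by simp }
  moreover
  { assume "L w = L w'" "t w = t w' + 1"
    then have ?thesis using inv_same[OF F g assms(3), of w'] by simp }
  moreover
  { assume "L w' = L w + 1" "t w' = t w \<or> t w' = t w - 1"
    then have ?thesis using inv_up[OF F g assms(3,4)] by simp }
  moreover
  { assume "L w = L w' + 1" "t w = t w' \<or> t w = t w' - 1"
    then have ?thesis using inv_up[OF F g assms(4,3)] by simp }
  ultimately show ?thesis by linarith
qed

lemma finite_bound: "finite X \<Longrightarrow> \<exists>M. \<forall>x\<in>X. (f x :: int) < M"
proof (induction X rule: finite_induct)
  case (insert x F)
  then obtain M where "\<forall>y\<in>F. f y < M" by blast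
  then show ?case by (intro exI[of _ "max M (f x + 1)"]) auto
qed simp

lemma parity: assumes F: "frame0 L t pt" and fin: "finite X" and nh: "no_holes X" and g: "closed_walk g"
  and gX: "set g \<subseteq> X" and w: "w \<notin> X"
  shows "even (ecount (cross L t w) g)"
proof -
  obtain M where M: "\<forall>x\<in>X. L x < M" using finite_bound[OF fin] by blast
  define z where "z = pt M 0"
  have Lz: "L z = M" unfolding z_def using frame0_pt[OF F] by simp
  have zX: "z \<notin> X" using M Lz by auto
  have "connected_in tadj (- X) w z" using nh w zX unfolding no_holes_def graph_connected_def by simp
  then have path: "(\<lambda>x y. x \<in> - X \<and> y \<in> - X \<and> tadj x y)\<^sup>*\<^sup>* w z" unfolding connected_in_def by simp
  have "even (ecount (cross L t w) g) = even (ecount (cross L t y) g)"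
    if "(\<lambda>x y. x \<in> - X \<and> y \<in> - X \<and> tadj x y)\<^sup>*\<^sup>* w y" for y
    using that
  proof (induction rule: rtranclp_induct)
    case (step y y')
    then have "even (ecount (cross L t y) g) = even (ecount (cross L t y') g)"
      using inv[OF F g, of y y'] gX by auto
    then show ?case using step by simp
  qed simp
  from this[OF path] have "even (ecount (cross L t w) g) = even (ecount (cross L t z) g)" .
  moreover have "ecount (cross L t z) g = 0"
  proof (rule ec_zero[where R=tadj])
    show "successively tadj g" using g by (simp add: closed_walk_def)
    show "\<forall>a\<in>set g. \<forall>b\<in>set g. tadj a b \<longrightarrow> \<not> cross L t z a b"
      using gX M Lz unfolding cross_def by fastforce
  qed
  ultimately show ?thesis by simp
qed

definition wlk :: "tvertex set \<Rightarrow> tvertex list \<Rightarrow> tvertex \<Rightarrow> tvertex \<Rightarrow> bool" where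
  "wlk S xs a b \<longleftrightarrow> xs \<noteq> [] \<and> hd xs = a \<and> last xs = b \<and> set xs \<subseteq> S \<and> successively tadj xs"

lemma is_walk_wlk: "is_walk S p u v \<longleftrightarrow> wlk S p u v"
  unfolding is_walk_def wlk_def successively_conv_nth by blast

lemma wlk_rev: "wlk S xs a b \<Longrightarrow> wlk S (rev xs) b a"
  unfolding wlk_def by (auto simp: hd_rev last_rev elim: successively_mono intro: tadj_sym)

lemma wlk_join: "wlk S xs a b \<Longrightarrow> wlk S ys b c \<Longrightarrow> wlk S (xs @ tl ys) a c"
  unfolding wlk_def
  by (cases ys) (auto simp: successively_append_iff successively_Cons)

lemma conn_wlk: assumes "connected_in tadj S a b" shows "\<exists>q. wlk S q a b"
proof -
  have "(\<lambda>x y. x \<in> S \<and> y \<in> S \<and> tadj x y)\<^sup>*\<^sup>* a b" "a \<in> S" using assms unfolding connected_in_def by auto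
  then show ?thesis
  proof (induction rule: rtranclp_induct)
    case base
    then show ?case by (intro exI[of _ "[a]"]) (simp add: wlk_def)
  next
    case (step y z)
    then obtain q where q: "wlk S q a y" by blast
    have "wlk S [y, z] y z" using step by (simp add: wlk_def)
    then show ?case using wlk_join[OF q] by blast
  qed
qed

lemma wlk_conn: "wlk S q a b \<Longrightarrow> connected_in tadj S a b"
proof (induction q arbitrary: a)
  case (Cons x q)
  show ?case
  proof (cases q)
    case Nil
    then show ?thesis using Cons.prems by (auto simp: wlk_def connected_in_def)
  next
    case (Cons y r)
    have "wlk S q y b" using Cons.prems Cons by (simp add: wlk_def)
    then have "connected_in tadj S y b" using Cons.IH by blast
    moreover have "x \<in> S" "y \<in> S" "tadj x y" "x = a" using Cons.prems Cons by (auto simp: wlk_def)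
    ultimately show ?thesis unfolding connected_in_def
      using converse_rtranclp_into_rtranclp[where r="\<lambda>x y. x \<in> S \<and> y \<in> S \<and> tadj x y" and a=a and b=y and c=b]
      by blast
  qed
qed (simp add: wlk_def)

definition line :: "(int \<Rightarrow> int \<Rightarrow> tvertex) \<Rightarrow> int \<Rightarrow> int \<Rightarrow> int \<Rightarrow> tvertex list" where
  "line pt l k1 k2 = map (pt l) (if k1 \<le> k2 then [k1..k2] else rev [k2..k1])"

lemma succ_upto: "successively (\<lambda>x y. y = x + 1) [i..j]"
  by (simp add: successively_conv_nth)

lemma line_props: assumes F: "frame0 L t pt"
  shows "line pt l k1 k2 \<noteq> []" "hd (line pt l k1 k2) = pt l k1" "last (line pt l k1 k2) = pt l k2"
    "set (line pt l k1 k2) = {pt l k | k. min k1 k2 \<le> k \<and> k \<le> max k1 k2}"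
    "length (line pt l k1 k2) = nat \<bar>k1 - k2\<bar> + 1"
    "successively tadj (line pt l k1 k2)"
proof -
  show "line pt l k1 k2 \<noteq> []" unfolding line_def by auto
  show "hd (line pt l k1 k2) = pt l k1"
  proof (cases "k1 \<le> k2")
    case True then show ?thesis by (simp add: line_def hd_map upto_rec1 del: upto_rec_numeral)
  next
    case False then show ?thesis by (simp add: line_def hd_map hd_rev upto_rec2 del: upto_rec_numeral)
  qed
  show "last (line pt l k1 k2) = pt l k2"
  proof (cases "k1 \<le> k2")
    case True then show ?thesis by (simp add: line_def last_map upto_rec2 del: upto_rec_numeral)
  next
    case False then show ?thesis by (simp add: line_def last_map last_rev upto_rec1 del: upto_rec_numeral)
  qed
  show "set (line pt l k1 k2) = {pt l k | k. min k1 k2 \<le> k \<and> k \<le> max k1 k2}" unfolding line_def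
    by auto
  show "length (line pt l k1 k2) = nat \<bar>k1 - k2\<bar> + 1" unfolding line_def by auto
  have adj: "tadj (pt l x) (pt l (x + 1))" "tadj (pt l (x + 1)) (pt l x)" for x
    using frame0_adj[OF F] frame0_pt[OF F] by auto
  show "successively tadj (line pt l k1 k2)"
  proof (cases "k1 \<le> k2")
    case True then show ?thesis
      using successively_mono[OF succ_upto[of k1 k2], of "\<lambda>x y. tadj (pt l x) (pt l y)"] adj by (auto simp: line_def successively_map)
  next
    case False then show ?thesis
      using successively_mono[OF succ_upto[of k2 k1], of "\<lambda>x y. tadj (pt l y) (pt l x)"] adj by (auto simp: line_def successively_map)
  qed
qed

lemma frame_axis: "frame d L t pt \<Longrightarrow> adj_axis d a b \<longleftrightarrow> L a = L b \<and> \<bar>t a - t b\<bar> = 1"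
  unfolding frame_def by blast

lemma frame_frame0: "frame d L t pt \<Longrightarrow> frame0 L t pt"
  unfolding frame_def by blast

lemma portal_struct:
  assumes F: "frame d L t pt" and fin: "finite X" and a0: "a0 \<in> X"
    and P: "P = {b. connected_in (adj_axis d) X a0 b}"
  shows "\<exists>c lo hi. (\<forall>z. z \<in> P \<longleftrightarrow> L z = c \<and> lo \<le> t z \<and> t z \<le> hi) \<and> P \<subseteq> X
     \<and> pt c (lo - 1) \<notin> X \<and> pt c (hi + 1) \<notin> X"
proof -
  define R where "R = (\<lambda>x y. x \<in> X \<and> y \<in> X \<and> adj_axis d x y)"
  have F0: "frame0 L t pt" using F by (rule frame_frame0)
  have Pm: "b \<in> P \<longleftrightarrow> b \<in> X \<and> R\<^sup>*\<^sup>* a0 b" for b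
    using P a0 unfolding connected_in_def R_def by auto
  have lev: "L b = L a0" if "R\<^sup>*\<^sup>* a0 b" for b
    using that by (induction rule: rtranclp_induct) (auto simp: R_def frame_axis[OF F])
  have ivt: "\<forall>k. min (t a0) (t b) \<le> k \<and> k \<le> max (t a0) (t b) \<longrightarrow> (\<exists>y. R\<^sup>*\<^sup>* a0 y \<and> t y = k)"
    if "R\<^sup>*\<^sup>* a0 b" for b
    using that
  proof (induction rule: rtranclp_induct)
    case base
    show ?case
    proof (intro allI impI)
      fix k assume "min (t a0) (t a0) \<le> k \<and> k \<le> max (t a0) (t a0)"
      then have "k = t a0" by simp
      then show "\<exists>y. R\<^sup>*\<^sup>* a0 y \<and> t y = k" by blast
    qed
  next
    case (step y z)
    have d: "\<bar>t y - t z\<bar> = 1" using step(2) by (auto simp: R_def frame_axis[OF F])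
    show ?case
    proof (intro allI impI)
      fix k assume k: "min (t a0) (t z) \<le> k \<and> k \<le> max (t a0) (t z)"
      show "\<exists>y. R\<^sup>*\<^sup>* a0 y \<and> t y = k"
      proof (cases "k = t z")
        case True then show ?thesis using step(1,2) by (intro exI[of _ z]) auto
      next
        case False
        then have "min (t a0) (t y) \<le> k \<and> k \<le> max (t a0) (t y)" using k d by linarith
        then show ?thesis using step(3) by blast
      qed
    qed
  qed
  have inX: "y \<in> X" if "R\<^sup>*\<^sup>* a0 y" for y
    using that a0 by (induction rule: rtranclp_induct) (auto simp: R_def)
  have PX: "P \<subseteq> X" using Pm by auto
  have finP: "finite P" using PX fin finite_subset by blast
  have a0P: "a0 \<in> P" using Pm a0 by auto
  define c where "c = L a0"
  define lo where "lo = Min (t ` P)"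
  define hi where "hi = Max (t ` P)"
  have "lo \<in> t ` P" using Min_in[of "t ` P"] finP a0P unfolding lo_def by blast
  then obtain blo where blo: "blo \<in> P" "t blo = lo" by (metis imageE)
  have "hi \<in> t ` P" using Max_in[of "t ` P"] finP a0P unfolding hi_def by blast
  then obtain bhi where bhi: "bhi \<in> P" "t bhi = hi" by (metis imageE)
  have char: "z \<in> P \<longleftrightarrow> L z = c \<and> lo \<le> t z \<and> t z \<le> hi" for z
  proof
    assume "z \<in> P"
    then have "R\<^sup>*\<^sup>* a0 z" using Pm by blast
    then have "L z = c" using lev unfolding c_def by blast
    moreover have "lo \<le> t z" unfolding lo_def using finP \<open>z \<in> P\<close> by simp
    moreover have "t z \<le> hi" unfolding hi_def using finP \<open>z \<in> P\<close> by simp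
    ultimately show "L z = c \<and> lo \<le> t z \<and> t z \<le> hi" by blast
  next
    assume z: "L z = c \<and> lo \<le> t z \<and> t z \<le> hi"
    have "\<exists>y. R\<^sup>*\<^sup>* a0 y \<and> t y = t z"
    proof (cases "t z \<le> t a0")
      case True
      have "R\<^sup>*\<^sup>* a0 blo" using Pm blo by blast
      moreover have "min (t a0) (t blo) \<le> t z \<and> t z \<le> max (t a0) (t blo)" using True blo z by linarith
      ultimately show ?thesis using ivt by blast
    next
      case False
      have "R\<^sup>*\<^sup>* a0 bhi" using Pm bhi by blast
      moreover have "min (t a0) (t bhi) \<le> t z \<and> t z \<le> max (t a0) (t bhi)" using False bhi z by linarith
      ultimately show ?thesis using ivt by blast
    qed
    then obtain y where y: "R\<^sup>*\<^sup>* a0 y" "t y = t z" by blast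
    have "y = z" using lev[OF y(1)] y(2) z frame0_eq[OF F0, of y z] unfolding c_def by simp
    then show "z \<in> P" using y inX Pm by blast
  qed
  have out: "pt c k \<notin> X" if k: "k = lo - 1 \<or> k = hi + 1" for k
  proof
    assume inx: "pt c k \<in> X"
    have Lk: "L (pt c k) = c" "t (pt c k) = k" using frame0_pt[OF F0] by auto
    from k show False
    proof
      assume k1: "k = lo - 1"
      have "R blo (pt c k)" unfolding R_def using inx blo PX Lk k1 char[of blo] frame_axis[OF F] by auto
      then have "pt c k \<in> P" using blo Pm inx by (meson rtranclp.rtrancl_into_rtrancl)
      then show False using char Lk k1 by auto
    next
      assume k1: "k = hi + 1"
      have "R bhi (pt c k)" unfolding R_def using inx bhi PX Lk k1 char[of bhi] frame_axis[OF F] by auto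
      then have "pt c k \<in> P" using bhi Pm inx by (meson rtranclp.rtrancl_into_rtrancl)
      then show False using char Lk k1 by auto
    qed
  qed
  show ?thesis using char PX out by blast
qed

lemma inv_vert: assumes F: "frame0 L t pt" and g: "closed_walk g" and "w \<notin> set g"
   "L w = L w0 + 1" "t w = t w0"
  shows "even (ecount (cross L t w0) g) = even (ecount (cross L t w) g)"
proof -
  define S where "S = (\<lambda>z. L z = L w \<and> t z \<ge> t w0)"
  have "even (ecount (\<lambda>a b. S a \<noteq> S b) g)"
    using ec_S[of g S] g unfolding closed_walk_def by simp
  moreover have "even (ecount (\<lambda>a b. S a \<noteq> S b) g) = even (ecount (cross L t w) g + ecount (cross L t w0) g)"
  proof (rule ec_xor[where R=tadj])
    show "successively tadj g" using g by (simp add: closed_walk_def)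
    show "\<forall>a\<in>set g. \<forall>b\<in>set g. tadj a b \<longrightarrow> (S a \<noteq> S b) = (cross L t w a b \<noteq> cross L t w0 a b)"
    proof (intro ballI impI)
      fix a b assume a: "a \<in> set g" and b: "b \<in> set g" and ab: "tadj a b"
      have ne: "a \<noteq> w" "b \<noteq> w" using a b assms by auto
      show "(S a \<noteq> S b) = (cross L t w a b \<noteq> cross L t w0 a b)"
        using E2[OF F ab assms(4,5)] ne unfolding S_def by simp
    qed
  qed
  ultimately show ?thesis by auto
qed

lemma key:
  assumes F: "frame0 L t pt" and fin: "finite X" and nh: "no_holes X"
    and Pc: "\<forall>z. z \<in> P \<longleftrightarrow> L z = c \<and> lo \<le> t z \<and> t z \<le> hi" and PX: "P \<subseteq> X"
    and e1: "pt c (lo - 1) \<notin> X" and e2: "pt c (hi + 1) \<notin> X"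
    and al: "al \<in> X" "al \<notin> P" and be: "be \<in> X" "be \<notin> P" and z1: "z1 \<in> P" and z2: "z2 \<in> P"
    and az: "tadj al z1" and zb: "tadj z2 be" and q: "wlk (X - P) q be al" and Lal: "L al = c + 1"
  shows "L be = c + 1 \<and> (\<forall>s. min (t al) (t be) \<le> s \<and> s \<le> max (t al) (t be) \<longrightarrow> pt (c + 1) s \<in> X)"
proof -
  have out: "t y < lo - 1 \<or> t y > hi + 1" if "y \<in> X" "y \<notin> P" "L y = c" for y
  proof (rule ccontr)
    assume "\<not> (t y < lo - 1 \<or> t y > hi + 1)"
    moreover have "\<not> (lo \<le> t y \<and> t y \<le> hi)" using that Pc by blast
    ultimately have "t y = lo - 1 \<or> t y = hi + 1" by linarith
    moreover have "y = pt c (t y)" using frame0_pt2[OF F, of y] that by simp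
    ultimately show False using e1 e2 that by auto
  qed
  have z1c: "L z1 = c" "lo \<le> t z1" "t z1 \<le> hi" using z1 Pc by auto
  have z2c: "L z2 = c" "lo \<le> t z2" "t z2 \<le> hi" using z2 Pc by auto
  have adj_az: "(L al = L z1 \<and> \<bar>t al - t z1\<bar> = 1) \<or> (L z1 = L al + 1 \<and> (t z1 = t al \<or> t z1 = t al - 1))
        \<or> (L al = L z1 + 1 \<and> (t al = t z1 \<or> t al = t z1 - 1))"
    using frame0_adj[OF F] az by blast
  have adj_zb: "(L z2 = L be \<and> \<bar>t z2 - t be\<bar> = 1) \<or> (L be = L z2 + 1 \<and> (t be = t z2 \<or> t be = t z2 - 1))
        \<or> (L z2 = L be + 1 \<and> (t z2 = t be \<or> t z2 = t be - 1))"
    using frame0_adj[OF F] zb by blast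
  have tal: "t al = t z1 \<or> t al = t z1 - 1" using adj_az Lal z1c by auto
  have Lbe: "L be = c + 1 \<or> L be = c - 1"
  proof -
    have "L be \<noteq> c"
    proof
      assume "L be = c"
      then have "t be < lo - 1 \<or> t be > hi + 1" using out be by blast
      then show False using adj_zb z2c \<open>L be = c\<close> by auto
    qed
    then show ?thesis using adj_zb z2c by auto
  qed
  define seg where "seg = line pt c (t z1) (t z2)"
  have seg: "seg \<noteq> []" "hd seg = z1" "last seg = z2" "successively tadj seg" "set seg \<subseteq> P"
  proof -
    show "seg \<noteq> []" "successively tadj seg" using line_props[OF F] unfolding seg_def by auto
    show "hd seg = z1" using line_props(2)[OF F] frame0_pt2[OF F, of z1] z1c unfolding seg_def by simp
    show "last seg = z2" using line_props(3)[OF F] frame0_pt2[OF F, of z2] z2c unfolding seg_def by simp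
    have "pt c k \<in> P" if "min (t z1) (t z2) \<le> k" "k \<le> max (t z1) (t z2)" for k
    proof -
      have "lo \<le> k \<and> k \<le> hi" using that z1c z2c by (auto simp: min_def max_def split: if_splits)
      then show ?thesis using Pc[rule_format, of "pt c k"] frame0_pt[OF F, of c k] by simp
    qed
    then show "set seg \<subseteq> P" using line_props(4)[OF F] unfolding seg_def by auto
  qed
  have segc: "\<forall>x\<in>set seg. L x = c" using seg(5) Pc by auto
  have qw: "q \<noteq> []" "hd q = be" "last q = al" "set q \<subseteq> X - P" "successively tadj q"
    using q unfolding wlk_def by auto
  define g where "g = al # seg @ q"
  have g: "closed_walk g"
    unfolding closed_walk_def g_def using seg qw az zb
    by (auto simp: successively_Cons successively_append_iff)
  have gX: "set g \<subseteq> X" unfolding g_def using seg(5) PX qw(4) al by auto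
  have cnt: "ecount (cross L t w) g = (if cross L t w al z1 then 1 else 0) + (if cross L t w z2 be then 1 else 0)
     + ecount (cross L t w) q" for w
  proof -
    have "ecount (cross L t w) seg = 0"
      by (rule ec_zero[where R=tadj]) (use seg(4) segc in \<open>auto simp: cross_def\<close>)
    then show ?thesis unfolding g_def using seg qw
      by (simp add: ec_Cons ec_append)
  qed
  define e2p where "e2p = pt c (hi + 1)"
  have Qeq: "ecount (cross L t w) q = ecount (cross L t e2p) q" if "L w = c" "lo - 1 \<le> t w" "t w \<le> hi + 1" for w
  proof (rule ec_cong[where R=tadj])
    show "successively tadj q" using qw by simp
    show "\<forall>a\<in>set q. \<forall>b\<in>set q. tadj a b \<longrightarrow> cross L t w a b = cross L t e2p a b"
    proof (intro ballI impI)
      fix a b assume a: "a \<in> set q" and b: "b \<in> set q"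
      have oa: "L a = c \<longrightarrow> t a < lo - 1 \<or> t a > hi + 1" using out a qw(4) by blast
      have ob: "L b = c \<longrightarrow> t b < lo - 1 \<or> t b > hi + 1" using out b qw(4) by blast
      have "L e2p = c" "t e2p = hi + 1" unfolding e2p_def using frame0_pt[OF F] by auto
      then show "cross L t w a b = cross L t e2p a b" unfolding cross_def using oa ob that by smt
    qed
  qed
  have ev: "even (ecount (cross L t w) g)" if "w \<notin> X" for w
    using parity[OF F fin nh g gX that] .
  have Lz: "L (pt l k) = l" "t (pt l k) = k" for l k using frame0_pt[OF F] by auto
  have Qe2: "even (ecount (cross L t e2p) q)"
  proof -
    have "\<not> cross L t e2p al z1" "\<not> cross L t e2p z2 be"
      unfolding cross_def e2p_def Lz using Lal z1c z2c Lbe by auto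
    then show ?thesis using ev[of e2p] e2 cnt[of e2p] unfolding e2p_def by simp
  qed
  have Lbe1: "L be = c + 1"
  proof (rule ccontr)
    assume nb: "L be \<noteq> c + 1"
    define e1p where "e1p = pt c (lo - 1)"
    have "cross L t e1p al z1" "\<not> cross L t e1p z2 be"
      unfolding cross_def e1p_def Lz using Lal z1c z2c Lbe nb by auto
    moreover have "ecount (cross L t e1p) q = ecount (cross L t e2p) q"
      by (rule Qeq) (use z1c in \<open>auto simp: e1p_def Lz\<close>)
    ultimately have "odd (ecount (cross L t e1p) g)" using cnt[of e1p] Qe2 by simp
    then show False using ev[of e1p] e1 unfolding e1p_def by simp
  qed
  have tbe: "t be = t z2 \<or> t be = t z2 - 1" using adj_zb Lbe1 z2c by auto
  have row: "pt (c + 1) s \<in> X" if s: "min (t al) (t be) \<le> s" "s \<le> max (t al) (t be)" for s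
  proof (rule ccontr)
    assume wX: "pt (c + 1) s \<notin> X"
    define w where "w = pt (c + 1) s"
    define w0 where "w0 = pt c s"
    have sal: "s \<noteq> t al" using wX al frame0_pt2[OF F, of al] Lal by auto
    have sbe: "s \<noteq> t be" using wX be frame0_pt2[OF F, of be] Lbe1 by auto
    have wg: "w \<notin> set g" using gX wX unfolding w_def by auto
    have "even (ecount (cross L t w0) g)"
      using inv_vert[OF F g wg, of w0] ev[of w] wX unfolding w_def w0_def Lz by simp
    moreover have "ecount (cross L t w0) q = ecount (cross L t e2p) q"
      by (rule Qeq) (use s tal tbe z1c z2c in \<open>auto simp: w0_def Lz\<close>)
    moreover have "(cross L t w0 al z1 \<or> cross L t w0 z2 be) \<and> \<not> (cross L t w0 al z1 \<and> cross L t w0 z2 be)"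
      unfolding cross_def w0_def Lz using Lal Lbe1 z1c z2c s sal sbe tal tbe by auto
    ultimately show False using cnt[of w0] Qe2 by auto
  qed
  show ?thesis using Lbe1 row by blast
qed


lemma succ_take: "successively R xs \<Longrightarrow> successively R (take n xs)"
proof -
  assume "successively R xs"
  then have "successively R (take n xs @ drop n xs)" by simp
  then show ?thesis unfolding successively_append_iff by blast
qed

lemma succ_drop: "successively R xs \<Longrightarrow> successively R (drop n xs)"
proof -
  assume "successively R xs"
  then have "successively R (take n xs @ drop n xs)" by simp
  then show ?thesis unfolding successively_append_iff by blast
qed

lemma sub_props:
  assumes "k \<le> m" "m < length p"
  shows "drop k (take (Suc m) p) \<noteq> []" "hd (drop k (take (Suc m) p)) = p ! k"
    "last (drop k (take (Suc m) p)) = p ! m" "length (drop k (take (Suc m) p)) = Suc m - k"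
    "x \<in> set (drop k (take (Suc m) p)) \<Longrightarrow> \<exists>idx. k \<le> idx \<and> idx \<le> m \<and> x = p ! idx"
    "successively R p \<Longrightarrow> successively R (drop k (take (Suc m) p))"
proof -
  show "drop k (take (Suc m) p) \<noteq> []" using assms by simp
  show "hd (drop k (take (Suc m) p)) = p ! k" using assms by (simp add: hd_drop_conv_nth)
  show "length (drop k (take (Suc m) p)) = Suc m - k" using assms by simp
  have len: "length (drop k (take (Suc m) p)) = Suc m - k" using assms by simp
  have nth: "drop k (take (Suc m) p) ! n = p ! (k + n)" if "n < Suc m - k" for n
    using that assms by simp
  show "last (drop k (take (Suc m) p)) = p ! m"
  proof -
    have "last (drop k (take (Suc m) p)) = drop k (take (Suc m) p) ! (Suc m - k - 1)"
      using last_conv_nth[of "drop k (take (Suc m) p)"] len assms by simp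
    also have "\<dots> = p ! (k + (Suc m - k - 1))" using nth assms by simp
    also have "k + (Suc m - k - 1) = m" using assms by simp
    finally show ?thesis .
  qed
  show "\<exists>idx. k \<le> idx \<and> idx \<le> m \<and> x = p ! idx" if xin: "x \<in> set (drop k (take (Suc m) p))"
  proof -
    obtain n where n: "n < length (drop k (take (Suc m) p))" "x = drop k (take (Suc m) p) ! n"
      using xin unfolding in_set_conv_nth by blast
    then have "x = p ! (k + n)" "n < Suc m - k" using nth len by auto
    then show ?thesis by (intro exI[of _ "k + n"]) simp
  qed
  show "successively R (drop k (take (Suc m) p))" if "successively R p"
    using succ_drop succ_take that by blast
qed

lemma replace_wlk:
  assumes "wlk S (A @ B @ C) u v" "wlk S r (hd B) (last B)" "B \<noteq> []"
  shows "wlk S (A @ r @ C) u v"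
proof -
  have w1: "A @ B @ C \<noteq> []" "hd (A @ B @ C) = u" "last (A @ B @ C) = v" "set (A @ B @ C) \<subseteq> S"
    "successively tadj (A @ B @ C)" using assms(1) unfolding wlk_def by auto
  have w2: "r \<noteq> []" "hd r = hd B" "last r = last B" "set r \<subseteq> S" "successively tadj r"
    using assms(2) unfolding wlk_def by auto
  have ne: "B \<noteq> []" by fact
  have "hd (A @ r @ C) = u"
    using w1(2) w2(1,2) ne by (cases A) auto
  moreover have "last (A @ r @ C) = v"
    using w1(3) w2(1,3) ne by (cases C) auto
  moreover have "set (A @ r @ C) \<subseteq> S" using w1(4) w2(4) by auto
  moreover have "successively tadj (A @ r @ C)"
  proof -
    have a: "successively tadj A" "successively tadj B" "successively tadj C"
      "A = [] \<or> tadj (last A) (hd B)" "C = [] \<or> tadj (last B) (hd C)"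
      using w1(5) ne unfolding successively_append_iff by auto
    show ?thesis unfolding successively_append_iff using a w2 by auto
  qed
  ultimately show ?thesis unfolding wlk_def using w2 by auto
qed

lemma tbound: assumes F: "frame0 L t pt"
  shows "successively tadj xs \<Longrightarrow> xs \<noteq> [] \<Longrightarrow> \<bar>t (hd xs) - t (last xs)\<bar> \<le> int (length xs) - 1"
proof (induction xs)
  case (Cons x ys)
  show ?case
  proof (cases ys)
    case Nil then show ?thesis by simp
  next
    case (Cons y zs)
    have "tadj x y" using Cons.prems Cons by simp
    then have "\<bar>t x - t y\<bar> \<le> 1" using frame0_adj[OF F, of x y] by smt
    moreover have "\<bar>t y - t (last ys)\<bar> \<le> int (length ys) - 1" using Cons.IH Cons.prems Cons by simp
    ultimately show ?thesis using Cons by simp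
  qed
qed simp

lemma side_lemma:
  assumes F: "frame0 L t pt" and Pc: "\<forall>z. z \<in> P \<longleftrightarrow> L z = c \<and> lo \<le> t z \<and> t z \<le> hi"
    and e1: "pt c (lo - 1) \<notin> X" and e2: "pt c (hi + 1) \<notin> X"
    and y: "y \<in> X" "y \<notin> P" and z: "z \<in> P" and yz: "tadj y z"
  shows "L y = c + 1 \<or> L y = c - 1"
proof -
  have zc: "L z = c" "lo \<le> t z" "t z \<le> hi" using z Pc by auto
  have adj: "(L y = L z \<and> \<bar>t y - t z\<bar> = 1) \<or> (L z = L y + 1 \<and> (t z = t y \<or> t z = t y - 1))
        \<or> (L y = L z + 1 \<and> (t y = t z \<or> t y = t z - 1))"
    using frame0_adj[OF F] yz by blast
  have "L y \<noteq> c"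
  proof
    assume Ly: "L y = c"
    have "\<not> (lo \<le> t y \<and> t y \<le> hi)" using y Pc Ly by blast
    then have "t y = lo - 1 \<or> t y = hi + 1" using adj Ly zc by smt
    moreover have "y = pt c (t y)" using frame0_pt2[OF F, of y] Ly by simp
    ultimately show False using e1 e2 y by auto
  qed
  then show ?thesis using adj zc by smt
qed

theorem mainTheorem4:
  fixes X P :: "tvertex set" and u v :: tvertex and p :: "tvertex list"
  assumes "finite X"
    and "graph_connected X"
    and "no_holes X"
    and "is_portal X P"
    and "u \<in> X - P" and "v \<in> X - P"
    and "is_shortest_path X p u v"
  shows "set p \<inter> P \<noteq> {} \<longleftrightarrow> \<not> connected_in tadj (X - P) u v"
proof -
  obtain d a0 where a0: "a0 \<in> X" and Pdef: "P = {b. connected_in (adj_axis d) X a0 b}"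
    using assms(4) unfolding is_portal_def by blast
  obtain L t pt where Fr: "frame d L t pt" using frame_ex by blast
  have F: "frame0 L t pt" using Fr by (rule frame_frame0)
  obtain c lo hi where Pc: "\<forall>z. z \<in> P \<longleftrightarrow> L z = c \<and> lo \<le> t z \<and> t z \<le> hi" and PX: "P \<subseteq> X"
    and e1: "pt c (lo - 1) \<notin> X" and e2: "pt c (hi + 1) \<notin> X"
    using portal_struct[OF Fr assms(1) a0 Pdef] by blast
  have pw: "wlk X p u v" using assms(7) unfolding is_shortest_path_def is_walk_wlk by blast
  have short: "\<And>q. wlk X q u v \<Longrightarrow> length p \<le> length q"
    using assms(7) unfolding is_shortest_path_def is_walk_wlk by blast
  have pw': "p \<noteq> []" "hd p = u" "last p = v" "set p \<subseteq> X" "successively tadj p"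
    using pw unfolding wlk_def by auto
  have uP: "u \<notin> P" "v \<notin> P" "u \<in> X" "v \<in> X" using assms(5,6) by auto
  show ?thesis
  proof
    assume hit: "set p \<inter> P \<noteq> {}"
    show "\<not> connected_in tadj (X - P) u v"
    proof
      assume conn: "connected_in tadj (X - P) u v"
      define I where "I = {k. k < length p \<and> p ! k \<in> P}"
      have finI: "finite I" unfolding I_def by simp
      obtain x where x: "x \<in> set p" "x \<in> P" using hit by blast
      then obtain k0 where "k0 < length p" "p ! k0 = x" by (metis in_set_conv_nth)
      then have neI: "I \<noteq> {}" unfolding I_def using x by blast
      define i where "i = Min I"
      define j where "j = Max I"
      have iI: "i \<in> I" "j \<in> I" using Min_in Max_in finI neI unfolding i_def j_def by auto
      have ij: "i \<le> j" using iI finI unfolding i_def j_def by simp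
      have before: "p ! k \<notin> P" if "k < i" for k
        using that finI Min_le[OF finI, of k] unfolding i_def I_def
        using iI(1) I_def i_def by fastforce
      have after: "p ! k \<notin> P" if "j < k" "k < length p" for k
        using that finI Max_ge[OF finI, of k] unfolding j_def I_def by fastforce
      have lenj: "j < length p" using iI unfolding I_def by simp
      have z1P: "p ! i \<in> P" and z2P: "p ! j \<in> P" using iI unfolding I_def by auto
      have i0: "0 < i"
      proof (rule ccontr)
        assume "\<not> 0 < i"
        then have "i = 0" by simp
        then have "p ! i = u" using pw'(1,2) by (simp add: hd_conv_nth)
        then show False using z1P uP by simp
      qed
      have jl: "Suc j < length p"
      proof (rule ccontr)
        assume "\<not> Suc j < length p"
        then have "j = length p - 1" using lenj by simp
        then have "p ! j = v" using pw'(1,3) by (simp add: last_conv_nth)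
        then show False using z2P uP by simp
      qed
      define al where "al = p ! (i - 1)"
      define be where "be = p ! Suc j"
      define z1 where "z1 = p ! i"
      define z2 where "z2 = p ! j"
      have inX: "p ! k \<in> X" if "k < length p" for k using pw'(4) that nth_mem by blast
      have alX: "al \<in> X" "al \<notin> P" unfolding al_def using inX before i0 ij lenj by auto
      have beX: "be \<in> X" "be \<notin> P" unfolding be_def using inX after jl by auto
      have az: "tadj al z1" unfolding al_def z1_def
        using successively_nth[OF pw'(5), of "i - 1"] i0 ij lenj by simp
      have zb: "tadj z2 be" unfolding be_def z2_def
        using successively_nth[OF pw'(5), of j] jl by simp
      define pre where "pre = drop 0 (take (Suc (i - 1)) p)"
      have wpre: "wlk (X - P) pre u al"
      proof -
        have r: "i - 1 < length p" using i0 ij lenj by simp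
        note sp = sub_props[OF le0 r]
        have "set pre \<subseteq> X - P"
        proof
          fix y assume "y \<in> set pre"
          then obtain idx where "idx \<le> i - 1" "y = p ! idx" using sp(5) unfolding pre_def by blast
          then show "y \<in> X - P" using before inX i0 r by auto
        qed
        then show ?thesis unfolding wlk_def pre_def al_def
          using sp(1,2,3) sp(6)[OF pw'(5)] pw'(1,2) by (simp add: hd_conv_nth)
      qed
      define suf where "suf = drop (Suc j) (take (Suc (length p - 1)) p)"
      have wsuf: "wlk (X - P) suf be v"
      proof -
        have r: "length p - 1 < length p" "Suc j \<le> length p - 1" using jl by auto
        note sp = sub_props[OF r(2) r(1)]
        have "set suf \<subseteq> X - P"
        proof
          fix y assume "y \<in> set suf"
          then obtain idx where "Suc j \<le> idx" "idx \<le> length p - 1" "y = p ! idx" using sp(5) unfolding suf_def by blast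
          then show "y \<in> X - P" using after inX r by auto
        qed
        then show ?thesis unfolding wlk_def suf_def be_def
          using sp(1,2,3) sp(6)[OF pw'(5)] pw'(1,3) by (simp add: last_conv_nth)
      qed
      obtain r where r: "wlk (X - P) r u v" using conn_wlk[OF conn] by blast
      have q: "wlk (X - P) (rev ((rev pre @ tl r) @ tl (rev suf))) be al"
        using wlk_rev[OF wlk_join[OF wlk_join[OF wlk_rev[OF wpre] r] wlk_rev[OF wsuf]]] .
      have z1: "z1 \<in> P" and z2: "z2 \<in> P" using z1P z2P unfolding z1_def z2_def by auto
      have Lal: "L al = c + 1 \<or> L al = c - 1"
        using side_lemma[OF F Pc e1 e2 alX z1 az] .
      have adj_az: "(L al = L z1 \<and> \<bar>t al - t z1\<bar> = 1) \<or> (L z1 = L al + 1 \<and> (t z1 = t al \<or> t z1 = t al - 1))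
        \<or> (L al = L z1 + 1 \<and> (t al = t z1 \<or> t al = t z1 - 1))"
        using frame0_adj[OF F] az by blast
      have adj_zb: "(L z2 = L be \<and> \<bar>t z2 - t be\<bar> = 1) \<or> (L be = L z2 + 1 \<and> (t be = t z2 \<or> t be = t z2 - 1))
        \<or> (L z2 = L be + 1 \<and> (t z2 = t be \<or> t z2 = t be - 1))"
        using frame0_adj[OF F] zb by blast
      have Lz: "L z1 = c" "L z2 = c" using z1 z2 Pc by auto
      obtain l where l: "L al = l" "L be = l" "\<forall>s. min (t al) (t be) \<le> s \<and> s \<le> max (t al) (t be) \<longrightarrow> pt l s \<in> X"
      proof (cases "L al = c + 1")
        case True
        have "L be = c + 1 \<and> (\<forall>s. min (t al) (t be) \<le> s \<and> s \<le> max (t al) (t be) \<longrightarrow> pt (c + 1) s \<in> X)"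
          using key[OF F assms(1,3) Pc PX e1 e2 alX beX z1 z2 az zb q True] .
        then show ?thesis using that True by blast
      next
        case False
        then have Lal': "L al = c - 1" using Lal by simp
        have K: "- L be = - c + 1 \<and> (\<forall>s. min (- t al) (- t be) \<le> s \<and> s \<le> max (- t al) (- t be) \<longrightarrow> pt (- (- c + 1)) (- s) \<in> X)"
        proof (rule key[of "\<lambda>z. - L z" "\<lambda>z. - t z" "\<lambda>l k. pt (- l) (- k)" X P "- c" "- hi" "- lo"])
          show "frame0 (\<lambda>z. - L z) (\<lambda>z. - t z) (\<lambda>l k. pt (- l) (- k))" using frame_neg[OF F] .
        qed (use assms(1,3) Pc PX e1 e2 alX beX z1 z2 az zb q Lal' in \<open>auto simp: add.commute\<close>)
        have "pt (c - 1) s \<in> X" if "min (t al) (t be) \<le> s" "s \<le> max (t al) (t be)" for s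
        proof -
          have "min (- t al) (- t be) \<le> - s \<and> - s \<le> max (- t al) (- t be)"
            using that by (simp add: min_def max_def split: if_splits)
          then show ?thesis using K[THEN conjunct2, rule_format, of "- s"] by simp
        qed
        then show ?thesis using that[of "c - 1"] K Lal' by auto
      qed
      have tb: "\<bar>t al - t be\<bar> \<le> \<bar>t z1 - t z2\<bar> + 1"
        using adj_az adj_zb Lz l(1,2) Lal by smt
      define mid where "mid = drop i (take (Suc j) p)"
      have tm: "\<bar>t z1 - t z2\<bar> \<le> int j - int i"
      proof -
        note sp = sub_props[OF ij lenj]
        have "\<bar>t (hd mid) - t (last mid)\<bar> \<le> int (length mid) - 1"
          using tbound[OF F sp(6)[OF pw'(5)] sp(1)] unfolding mid_def .
        then show ?thesis using sp(2,3,4) ij unfolding mid_def z1_def z2_def by simp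
      qed
      define row where "row = line pt l (t al) (t be)"
      have wrow: "wlk X row al be"
      proof -
        have "set row \<subseteq> X" using line_props(4)[OF F] l(3) unfolding row_def by auto
        moreover have "hd row = al" "last row = be"
          using line_props(2,3)[OF F] frame0_pt2[OF F, of al] frame0_pt2[OF F, of be] l(1,2)
          unfolding row_def by auto
        ultimately show ?thesis using line_props(1,6)[OF F] unfolding row_def wlk_def by auto
      qed
      define A where "A = take (i - 1) p"
      define B where "B = drop (i - 1) (take (Suc (Suc j)) p)"
      define C where "C = drop (Suc (Suc j)) p"
      have r1: "i - 1 \<le> Suc j" using ij by simp
      note spB = sub_props[OF r1 jl]
      have ABC: "A @ B @ C = p"
      proof -
        have "A @ B = take (Suc (Suc j)) p"
        proof -
          have "take (i - 1) (take (Suc (Suc j)) p) = A" unfolding A_def using r1 by (simp add: min_def)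
          then show ?thesis unfolding B_def by (metis append_take_drop_id)
        qed
        then show ?thesis unfolding C_def by (metis append.assoc append_take_drop_id)
      qed
      have hdB: "hd B = al" "last B = be" "B \<noteq> []" using spB(1,2,3) unfolding B_def al_def be_def by auto
      have lenB: "length B = Suc (Suc j) - (i - 1)" using spB(4) unfolding B_def .
      have wnew: "wlk X (A @ row @ C) u v"
        using replace_wlk[of X A B C u v row] ABC pw wrow hdB by simp
      have "length row = nat \<bar>t al - t be\<bar> + 1" using line_props(5)[OF F] unfolding row_def .
      then have "length row < length B" using tb tm lenB i0 ij by linarith
      then have "length (A @ row @ C) < length p" using ABC by (metis add_less_mono1 length_append nat_add_left_cancel_less)
      then show False using short[OF wnew] by simp
    qed
  next
    assume nc: "\<not> connected_in tadj (X - P) u v"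
    show "set p \<inter> P \<noteq> {}"
    proof
      assume "set p \<inter> P = {}"
      then have "wlk (X - P) p u v" using pw unfolding wlk_def by auto
      then show False using wlk_conn nc by blast
    qed
  qed
qed

end
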